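(* Let $n\ge 2$ and $L=2^n+k$ with $0\le k<2^n$. (i) If $0\le k<2^{n-1}$, then among the words of length $L$ in $\mathrm{Sub}_\tau$ there are exactly two right-special words: the suffix of length $L$ of $\tau^n(a)$, whose extensions are by $x$, $y$ and $z$; and the suffix of length $L$ of the word $\tau^{n-2}(a)\,\tau^{n-2}(x)\,\tau^{n-1}(a)$, whose extensions are by $\tau^{n-2}(x)$ and by $\tau^{n-1}(x)$. (ii) If $2^{n-1}\le k<2^n$, then there is exactly one right-special word of length $L$ in $\mathrm{Sub}_\tau$, namely the suffix of length $L$ of $\tau^n(a)$, whose extensions are by $x$, $y$ and $z$.
   Context: Let $\mathcal{A}=\{a,x,y,z\}$ and let $\tau$ be the substitution (monoid morphism on finite words over $\mathcal{A}$) defined by $\tau(a)=axa$, $\tau(x)=y$, $\tau(y)=z$, $\tau(z)=x$; thus $\tau^m(x)$ equals $x$, $y$, $z$ according as $m\equiv 0,1,2 \pmod 3$. For a finite word $w$, $\mathrm{Sub}(w)$ denotes the set of finite (contiguous) subwords of $w$. Let $\mathrm{Sub}_\tau=\bigcup_{s\in\mathcal{A},\,n\in\mathbb{N}\cup\{0\}}\mathrm{Sub}(\tau^n(s))$. For $w\in\mathrm{Sub}_\tau$ and $s\in\mathcal{A}$, $w$ can be extended by $s$ if $ws\in\mathrm{Sub}_\tau$. A word $w\in\mathrm{Sub}_\tau$ is right-special if it can be extended by more than one letter of $\mathcal{A}$. *)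

theory Defs
  imports Main "HOL-Library.Sublist"
begin

datatype letter = A | X | Y | Z

fun tau_letter :: "letter \<Rightarrow> letter list" where
  "tau_letter A = [A, X, A]"
| "tau_letter X = [Y]"
| "tau_letter Y = [Z]"
| "tau_letter Z = [X]"

definition tau :: "letter list \<Rightarrow> letter list" where
  "tau w = concat (map tau_letter w)"

definition Sub_tau :: "letter list set" where
  "Sub_tau = {w. \<exists>s n. sublist w ((tau ^^ n) [s])}"

definition extensions :: "letter list \<Rightarrow> letter set" where
  "extensions w = {s. w @ [s] \<in> Sub_tau}"

definition right_special :: "letter list \<Rightarrow> bool" where
  "right_special w \<longleftrightarrow> w \<in> Sub_tau \<and> (\<exists>s t. s \<noteq> t \<and> s \<in> extensions w \<and> t \<in> extensions w)"

definition suffix_len :: "nat \<Rightarrow> 'a list \<Rightarrow> 'a list" where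
  "suffix_len L u = drop (length u - L) u"

end

theory Submission
  imports Defs
begin


fun sig :: "letter \<Rightarrow> letter" where
  "sig A = X" | "sig X = Y" | "sig Y = Z" | "sig Z = X"

function om :: "nat \<Rightarrow> letter" where
  "om n = (if n = 0 then A else if odd n then A else sig (om (n div 2)))"
  by auto
termination by (relation "measure id") auto

declare om.simps[simp del]

lemma sig_neq_A[simp]: "sig c \<noteq> A" by (cases c) auto

lemma om_0[simp]: "om 0 = A" by (simp add: om.simps)
lemma om_odd: "odd n \<Longrightarrow> om n = A" by (simp add: om.simps)
lemma om_even: "n > 0 \<Longrightarrow> om (2*n) = sig (om n)" by (subst om.simps) auto
lemma om_Suc2: "om (Suc (2*n)) = A" by (simp add: om_odd)

lemma om_A_iff: "n > 0 \<Longrightarrow> (om n = A) = odd n"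
proof -
  assume "n > 0"
  show ?thesis
  proof (cases "odd n")
    case True thus ?thesis by (simp add: om_odd)
  next
    case False
    then obtain m where "n = 2*m" by blast
    with \<open>n>0\<close> show ?thesis by (simp add: om_even)
  qed
qed

lemma om_period: "0 < i \<Longrightarrow> i < 2^N \<Longrightarrow> om (2^N*t + i) = om i"
proof (induction N arbitrary: i t)
  case 0 thus ?case by simp
next
  case (Suc N)
  show ?case
  proof (cases "odd i")
    case True
    hence "odd (2^Suc N * t + i)" by simp
    with True show ?thesis by (simp add: om_odd)
  next
    case False
    then obtain j where j: "i = 2*j" by blast
    with Suc.prems have "0 < j" "j < 2^N" by auto
    have "2^Suc N * t + i = 2*(2^N*t + j)" using j by simp
    moreover have "om (2*(2^N*t+j)) = sig (om (2^N*t+j))" using \<open>0<j\<close> by (intro om_even) simp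
    ultimately have "om (2^Suc N * t + i) = sig (om (2^N*t+j))" by (simp add: mult.assoc)
    also have "\<dots> = sig (om j)" using Suc.IH[OF \<open>0<j\<close> \<open>j<2^N\<close>] by simp
    also have "\<dots> = om i" using j \<open>0<j\<close> by (simp add: om_even)
    finally show ?thesis .
  qed
qed

lemma om_pow2: "om (2^N) = (sig^^N) A"
proof (induction N)
  case 0 thus ?case by (simp add: om_odd)
next
  case (Suc N)
  have "om (2^Suc N) = om (2*2^N)" by simp
  also have "\<dots> = sig (om (2^N))" by (simp add: om_even)
  finally show ?case using Suc by simp
qed

lemma sig_eq_Z: "sig c = Z \<longleftrightarrow> c = Y" by (cases c) auto
lemma sig_eq_X: "sig c = X \<longleftrightarrow> c = A \<or> c = Z" by (cases c) auto
lemma sig_inj: "c \<noteq> A \<Longrightarrow> d \<noteq> A \<Longrightarrow> sig c = sig d \<Longrightarrow> c = d"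
  by (cases c; cases d) auto

lemma om_Z: "om e = Z \<Longrightarrow> 4 dvd e"
proof -
  assume h: "om e = Z"
  have "e > 0" using h by (cases "e = 0") auto
  have "even e" using h om_A_iff[OF \<open>e>0\<close>] by auto
  then obtain m where m: "e = 2*m" by blast
  with \<open>e>0\<close> have "m>0" by simp
  have "om m = Y" using h m \<open>m>0\<close> by (simp add: om_even sig_eq_Z)
  hence "even m" using om_A_iff[OF \<open>m>0\<close>] by auto
  thus ?thesis using m by auto
qed

definition W :: "nat \<Rightarrow> nat \<Rightarrow> letter list" where
  "W p L = map om [p..<p+L]"

lemma length_W[simp]: "length (W p L) = L" by (simp add: W_def)
lemma nth_W[simp]: "i < L \<Longrightarrow> W p L ! i = om (p+i)" by (simp add: W_def nth_map_upt)
lemma W_eq: "W p L = W q L \<longleftrightarrow> (\<forall>i<L. om (p+i) = om (q+i))"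
  by (auto simp: list_eq_iff_nth_eq)
lemma W_Suc: "W p (Suc L) = W p L @ [om (p+L)]" by (simp add: W_def)

lemma tau_append[simp]: "tau (xs @ ys) = tau xs @ tau ys" by (simp add: tau_def)
lemma taun_append: "(tau^^n) (xs @ ys) = (tau^^n) xs @ (tau^^n) ys"
  by (induction n) auto
lemma sign_neq_A: "c \<noteq> A \<Longrightarrow> (sig^^n) c \<noteq> A"
  by (induction n) auto
lemma tau_single: "c \<noteq> A \<Longrightarrow> tau [c] = [sig c]" by (cases c) (auto simp: tau_def)
lemma taun_letter: "c \<noteq> A \<Longrightarrow> (tau^^n) [c] = [(sig^^n) c]"
  by (induction n) (auto simp: tau_single sign_neq_A)

lemma map_om_shift: "0 < t \<Longrightarrow> map om [2^N*t+1..<2^N*t+2^N] = map om [1..<2^N]"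
proof (rule nth_equalityI)
  fix i assume "i < length (map om [2^N*t+1..<2^N*t+2^N])"
  hence i: "i < 2^N - 1" by simp
  have "om (2^N*t+1+i) = om (1+i)" using om_period[of "1+i" N t] i by (simp add: add.assoc)
  thus "map om [2^N*t+1..<2^N*t+2^N] ! i = map om [1..<2^N] ! i" using i by (simp add: nth_map_upt)
qed simp

lemma taun_A: "(tau^^n) [A] = map om [1..<2^(n+1)]"
proof (induction n)
  case 0 thus ?case by (simp add: om_odd upt_rec)
next
  case (Suc n)
  have "(tau^^Suc n) [A] = (tau^^n) (tau [A])" by (simp add: funpow_Suc_right del: funpow.simps)
  also have "tau [A] = [A] @ [X] @ [A]" by (simp add: tau_def)
  also have "(tau^^n) ([A] @ [X] @ [A]) = map om [1..<2^(n+1)] @ [(sig^^n) X] @ map om [1..<2^(n+1)]"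
    using Suc by (simp only: taun_append) (simp add: taun_letter)
  also have "\<dots> = map om [1..<2^(Suc n+1)]"
  proof -
    have s: "(sig^^n) X = om (2^(n+1))" unfolding om_pow2
      by (simp add: funpow_Suc_right del: funpow.simps)
    have "[1..<2^(Suc n+1)] = [1..<2^(n+1)] @ [2^(n+1)..<2^(n+1)+2^(n+1)]"
      by (subst upt_add_eq_append[symmetric]) auto
    also have "[2^(n+1)..<2^(n+1)+2^(n+1)] = 2^(n+1) # [2^(n+1)*1+1..<2^(n+1)*1+2^(n+1)]"
      by (simp add: upt_rec)
    finally show ?thesis using map_om_shift[of 1 "n+1"] s by simp
  qed
  finally show ?case .
qed



lemma sublist_map_upt:
  assumes "sublist w (map f [a..<b])"
  shows "\<exists>c\<ge>a. w = map f [c..<c+length w]"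
proof -
  obtain ps ss where e: "map f [a..<b] = ps @ w @ ss" using assms by (auto simp: sublist_def)
  have len: "length ps + length w \<le> b - a" using arg_cong[OF e, of length] by simp
  have "w = take (length w) (drop (length ps) (map f [a..<b]))" using e by simp
  also have "\<dots> = map f [a + length ps..<a + length ps + length w]"
    using len by (cases "a \<le> b") (auto simp: take_map drop_map)
  finally show ?thesis by (intro exI[of _ "a + length ps"]) simp
qed

lemma om_2: "om 2 = X" using om_pow2[of 1] by simp
lemma om_4: "om 4 = Y" using om_pow2[of 2] by (simp add: numeral_eq_Suc)
lemma om_8: "om 8 = Z" using om_pow2[of 3] by (simp add: numeral_eq_Suc)

lemma Sub_pos: "w \<in> Sub_tau \<longleftrightarrow> (\<exists>p\<ge>1. w = W p (length w))"
proof
  assume "w \<in> Sub_tau"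
  then obtain s n where h: "sublist w ((tau^^n) [s])" by (auto simp: Sub_tau_def)
  show "\<exists>p\<ge>1. w = W p (length w)"
  proof (cases "s = A")
    case True
    with h have "sublist w (map om [1..<2^(n+1)])" by (simp add: taun_A)
    from sublist_map_upt[OF this] show ?thesis by (auto simp: W_def)
  next
    case False
    with h have "sublist w [(sig^^n) s]" by (simp add: taun_letter)
    hence "w = [] \<or> w = [(sig^^n) s]"
      by (auto simp: sublist_Cons_right prefix_Cons)
    moreover have "(sig^^n) s \<noteq> A" using False sign_neq_A by blast
    ultimately show ?thesis
    proof (elim disjE)
      assume "w = []" thus ?thesis by (intro exI[of _ 1]) (simp add: W_def)
    next
      assume w: "w = [(sig^^n) s]" and "(sig^^n) s \<noteq> A"
      then consider "(sig^^n) s = X" | "(sig^^n) s = Y" | "(sig^^n) s = Z" by (cases "(sig^^n) s") auto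
      thus ?thesis
      proof cases
        case 1 thus ?thesis using w by (intro exI[of _ 2]) (simp add: W_def om_2)
      next
        case 2 thus ?thesis using w by (intro exI[of _ 4]) (simp add: W_def om_4)
      next
        case 3 thus ?thesis using w by (intro exI[of _ 8]) (simp add: W_def om_8)
      qed
    qed
  qed
next
  assume "\<exists>p\<ge>1. w = W p (length w)"
  then obtain p where p: "p \<ge> 1" "w = W p (length w)" by blast
  define L where "L = length w"
  define M :: nat where "M = 2^(p+L+1)"
  have "p + L + 1 < 2^(p+L+1)" by (rule less_exp)
  hence pm: "p + L \<le> M" unfolding M_def by linarith
  have e1: "[1..<M] = [1..<p] @ [p..<M]"
    using upt_add_eq_append[of 1 p "M-p"] p pm by simp
  have e2: "[p..<M] = [p..<p+L] @ [p+L..<M]"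
    using upt_add_eq_append[of p "p+L" "M-(p+L)"] pm by simp
  have "map om [1..<M] = map om [1..<p] @ map om [p..<p+L] @ map om [p+L..<M]"
    unfolding e1 e2 by simp
  hence "sublist (map om [p..<p+L]) (map om [1..<M])" by (simp only: sublist_appendI)
  hence "sublist w ((tau^^(p+L)) [A])" using p by (simp add: taun_A W_def L_def M_def)
  thus "w \<in> Sub_tau" by (auto simp: Sub_tau_def)
qed

lemma ext_pos: "s \<in> extensions w \<longleftrightarrow> (\<exists>q\<ge>1. w = W q (length w) \<and> s = om (q + length w))"
  unfolding extensions_def by (auto simp: Sub_pos W_Suc)

lemma rs_pos: "right_special w \<longleftrightarrow>
   (\<exists>p\<ge>1. \<exists>q\<ge>1. w = W p (length w) \<and> w = W q (length w) \<and> om (p + length w) \<noteq> om (q + length w))"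
  unfolding right_special_def ext_pos Sub_pos by blast



lemma W_eq0: "W p L = W q L \<Longrightarrow> L > 0 \<Longrightarrow> om p = om q"
  by (simp add: W_eq) (metis add.right_neutral)

lemma H1: "p \<ge> 1 \<Longrightarrow> q \<ge> 1 \<Longrightarrow> om p = om q \<Longrightarrow> odd p = odd q"
  using om_A_iff[of p] om_A_iff[of q] by auto

lemma K0: assumes "odd P" "even Q" "Q \<ge> 1" "sig (om P) = sig (om Q)" "sig (om (P+2)) = sig (om (Q+2))"
  shows False
proof -
  have "om P = A" "om (P+2) = A" using assms by (auto simp: om_odd)
  moreover have "om Q \<noteq> A" "om (Q+2) \<noteq> A" using assms om_A_iff[of Q] om_A_iff[of "Q+2"] by auto
  moreover have "sig (om Q) = X" "sig (om (Q+2)) = X" using assms(4,5) calculation by auto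
  ultimately have "om Q = Z" "om (Q+2) = Z" unfolding sig_eq_X by auto
  hence "4 dvd Q" "4 dvd (Q+2)" using om_Z by blast+
  thus False by presburger
qed

lemma K: assumes "L' \<ge> 4" "P \<ge> 1" "Q \<ge> 1" "\<forall>j<L'. sig (om (P+j)) = sig (om (Q+j))"
  shows "\<forall>j<L'. om (P+j) = om (Q+j)"
proof -
  have s0: "sig (om P) = sig (om Q)" and s2: "sig (om (P+2)) = sig (om (Q+2))"
    using assms(1) assms(4)[rule_format, of 0] assms(4)[rule_format, of 2] by auto
  have par: "odd P = odd Q"
  proof (rule ccontr)
    assume "odd P \<noteq> odd Q"
    hence "(odd P \<and> even Q) \<or> (odd Q \<and> even P)" by auto
    thus False using K0[OF _ _ _ s0 s2] K0[OF _ _ _ s0[symmetric] s2[symmetric]] assms(2,3) by auto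
  qed
  show ?thesis
  proof (intro allI impI)
    fix j assume "j < L'"
    have e: "sig (om (P+j)) = sig (om (Q+j))" using assms(4) \<open>j<L'\<close> by blast
    show "om (P+j) = om (Q+j)"
    proof (cases "odd (P+j)")
      case True
      hence "odd (Q+j)" using par by simp
      thus ?thesis using True by (simp add: om_odd)
    next
      case False
      hence "even (Q+j)" using par by simp
      hence "om (P+j) \<noteq> A" "om (Q+j) \<noteq> A" using False om_A_iff[of "P+j"] om_A_iff[of "Q+j"] assms(2,3) by auto
      thus ?thesis using sig_inj e by blast
    qed
  qed
qed

lemma par_lemma: "(b::nat) \<le> 1 \<Longrightarrow> (P::nat) \<ge> 1 \<Longrightarrow> odd (2*P - b + i) = odd (b + i)" by presburger
lemma even_lemma: "(b::nat) \<le> 1 \<Longrightarrow> (P::nat) \<ge> 1 \<Longrightarrow> even (b + i) \<Longrightarrow> 2*P - b + i = 2*(P + i div 2)" by presburger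

lemma H2: assumes "b \<le> 1" "L' \<ge> 4" "P \<ge> 1" "Q \<ge> 1"
  shows "W (2*P - b) (2*L'+b) = W (2*Q - b) (2*L'+b) \<longleftrightarrow> W P L' = W Q L'"
proof
  assume "W (2*P - b) (2*L'+b) = W (2*Q - b) (2*L'+b)"
  hence h: "\<forall>i<2*L'+b. om (2*P - b + i) = om (2*Q - b + i)" by (simp add: W_eq)
  have "\<forall>j<L'. sig (om (P+j)) = sig (om (Q+j))"
  proof (intro allI impI)
    fix j assume "j < L'"
    hence "om (2*P - b + (2*j+b)) = om (2*Q - b + (2*j+b))" using h by simp
    moreover have "2*P - b + (2*j+b) = 2*(P+j)" "2*Q - b + (2*j+b) = 2*(Q+j)" using assms by auto
    ultimately show "sig (om (P+j)) = sig (om (Q+j))" using assms om_even[of "P+j"] om_even[of "Q+j"] by simp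
  qed
  from K[OF assms(2-4) this] show "W P L' = W Q L'" by (simp add: W_eq)
next
  assume "W P L' = W Q L'"
  hence h: "\<forall>j<L'. om (P+j) = om (Q+j)" by (simp add: W_eq)
  have "\<forall>i<2*L'+b. om (2*P - b + i) = om (2*Q - b + i)"
  proof (intro allI impI)
    fix i assume i: "i < 2*L'+b"
    show "om (2*P - b + i) = om (2*Q - b + i)"
    proof (cases "odd (b+i)")
      case True
      thus ?thesis using par_lemma[OF assms(1,3)] par_lemma[OF assms(1,4)] by (simp add: om_odd)
    next
      case False
      hence "i div 2 < L'" using i assms(1) by presburger
      hence eq: "om (P + i div 2) = om (Q + i div 2)" using h by blast
      have e1: "2*P - b + i = 2*(P + i div 2)" using even_lemma[OF assms(1,3)] False by blast
      have e2: "2*Q - b + i = 2*(Q + i div 2)" using even_lemma[OF assms(1,4)] False by blast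
      have o1: "om (2*(P + i div 2)) = sig (om (P + i div 2))" using assms(3) by (intro om_even) simp
      have o2: "om (2*(Q + i div 2)) = sig (om (Q + i div 2))" using assms(4) by (intro om_even) simp
      show ?thesis by (simp only: e1 e2 o1 o2 eq)
    qed
  qed
  thus "W (2*P - b) (2*L'+b) = W (2*Q - b) (2*L'+b)" by (simp add: W_eq)
qed

lemma H3: "b \<le> 1 \<Longrightarrow> P \<ge> 1 \<Longrightarrow> om (2*P - b + (2*L'+b)) = sig (om (P + L'))"
proof -
  assume "b \<le> 1" "P \<ge> 1"
  hence e: "2*P - b + (2*L'+b) = 2*(P+L')" by auto
  have o: "om (2*(P+L')) = sig (om (P+L'))" using \<open>P\<ge>1\<close> by (intro om_even) simp
  show ?thesis by (simp only: e o)
qed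

lemma decomp: "(b::nat) \<le> 1 \<Longrightarrow> (q::nat) \<ge> 1 \<Longrightarrow> even (q + b) \<Longrightarrow> \<exists>Q\<ge>1. q = 2*Q - b"
  by (rule exI[of _ "(q+b) div 2"]) presburger

definition RS :: "nat \<Rightarrow> letter list set" where
  "RS L = {w. length w = L \<and> right_special w}"

lemma RS_pos: "w \<in> RS L \<longleftrightarrow> (\<exists>p\<ge>1. \<exists>q\<ge>1. w = W p L \<and> w = W q L \<and> om (p + L) \<noteq> om (q + L))"
proof
  assume "w \<in> RS L"
  hence "length w = L" "right_special w" by (auto simp: RS_def)
  thus "\<exists>p\<ge>1. \<exists>q\<ge>1. w = W p L \<and> w = W q L \<and> om (p + L) \<noteq> om (q + L)" unfolding rs_pos by simp
next
  assume h: "\<exists>p\<ge>1. \<exists>q\<ge>1. w = W p L \<and> w = W q L \<and> om (p + L) \<noteq> om (q + L)"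
  hence l: "length w = L" by auto
  with h have "right_special w" unfolding rs_pos by simp
  with l show "w \<in> RS L" by (simp add: RS_def)
qed

lemma red_a: assumes "b \<le> 1" "L' \<ge> 4" "w \<in> RS (2*L'+b)"
  shows "\<exists>P\<ge>1. w = W (2*P - b) (2*L'+b) \<and> W P L' \<in> RS L'"
proof -
  obtain p q where pq: "p\<ge>1" "q\<ge>1" "w = W p (2*L'+b)" "w = W q (2*L'+b)"
    "om (p + (2*L'+b)) \<noteq> om (q + (2*L'+b))" using assms(3) unfolding RS_pos by blast
  have "om p = om q" using W_eq0[OF trans[OF pq(3)[symmetric] pq(4)]] assms(2) by simp
  hence par: "odd p = odd q" using H1 pq by blast
  have ev: "even (p+b)"
  proof (rule ccontr)
    assume "odd (p+b)"
    hence "odd (p + (2*L'+b))" "odd (q + (2*L'+b))" using par by auto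
    thus False using pq(5) by (simp add: om_odd)
  qed
  hence ev2: "even (q+b)" using par by auto
  obtain P where P: "P\<ge>1" "p = 2*P - b" using decomp[OF assms(1) pq(1) ev] by blast
  obtain Q where Q: "Q\<ge>1" "q = 2*Q - b" using decomp[OF assms(1) pq(2) ev2] by blast
  have "W P L' = W Q L'" using H2[OF assms(1,2) P(1) Q(1)] pq P Q by simp
  moreover have "om (P+L') \<noteq> om (Q+L')" using pq(5) H3[OF assms(1) P(1)] H3[OF assms(1) Q(1)] P Q by auto
  ultimately have "W P L' \<in> RS L'" unfolding RS_pos using P Q by blast
  thus ?thesis using P pq by blast
qed

lemma red_b: assumes "b \<le> 1" "L' \<ge> 4" "P \<ge> 1" "W P L' \<in> RS L'"
  shows "W (2*P - b) (2*L'+b) \<in> RS (2*L'+b)"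
proof -
  obtain p q where pq: "p\<ge>1" "q\<ge>1" "W P L' = W p L'" "W P L' = W q L'"
    "om (p + L') \<noteq> om (q + L')" using assms(4) unfolding RS_pos by blast
  have "om p = om q" using W_eq0[OF trans[OF pq(3)[symmetric] pq(4)]] assms(2) by simp
  hence par: "odd p = odd q" using H1 pq by blast
  hence "odd (p+L') = odd (q+L')" by simp
  hence "om (p+L') \<noteq> A" "om (q+L') \<noteq> A" using pq(5) om_A_iff[of "p+L'"] om_A_iff[of "q+L'"] pq(1,2) by auto
  hence "sig (om (p+L')) \<noteq> sig (om (q+L'))" using pq(5) sig_inj by blast
  hence d: "om (2*p - b + (2*L'+b)) \<noteq> om (2*q - b + (2*L'+b))" using H3[OF assms(1) pq(1)] H3[OF assms(1) pq(2)] by simp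
  have "W (2*P - b) (2*L'+b) = W (2*p - b) (2*L'+b)" "W (2*P - b) (2*L'+b) = W (2*q - b) (2*L'+b)"
    using H2[OF assms(1,2,3) pq(1)] H2[OF assms(1,2,3) pq(2)] pq(3,4) by auto
  moreover have "2*p - b \<ge> 1" "2*q - b \<ge> 1" using pq assms(1) by auto
  ultimately show ?thesis unfolding RS_pos using d by blast
qed

lemma red_c: assumes "b \<le> 1" "L' \<ge> 4" "P \<ge> 1"
  shows "extensions (W (2*P - b) (2*L'+b)) = sig ` extensions (W P L')"
proof
  show "extensions (W (2*P - b) (2*L'+b)) \<subseteq> sig ` extensions (W P L')"
  proof
    fix s assume "s \<in> extensions (W (2*P - b) (2*L'+b))"
    then obtain q where q: "q\<ge>1" "W (2*P - b) (2*L'+b) = W q (2*L'+b)" "s = om (q + (2*L'+b))"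
      unfolding ext_pos by auto
    have "om (2*P - b) = om q" using W_eq0[OF q(2)] assms(2) by simp
    moreover have "2*P - b \<ge> 1" using assms by auto
    ultimately have "odd (2*P - b) = odd q" using H1 q(1) by blast
    hence "even (q+b)" using par_lemma[OF assms(1,3), of 0] by auto
    then obtain Q where Q: "Q\<ge>1" "q = 2*Q - b" using decomp[OF assms(1) q(1)] by blast
    have "W P L' = W Q L'" using H2[OF assms(1,2,3) Q(1)] q(2) Q(2) by simp
    moreover have "s = sig (om (Q + L'))" using q(3) Q H3[OF assms(1) Q(1)] by simp
    moreover have "om (Q+L') \<in> extensions (W P L')" unfolding ext_pos using Q(1) calculation(1) by auto
    ultimately show "s \<in> sig ` extensions (W P L')" by simp
  qed
next
  show "sig ` extensions (W P L') \<subseteq> extensions (W (2*P - b) (2*L'+b))"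
  proof
    fix s assume "s \<in> sig ` extensions (W P L')"
    then obtain t where t: "t \<in> extensions (W P L')" "s = sig t" by blast
    from t(1) obtain Q where Q0: "Q\<ge>1" "W P L' = W Q L'" "t = om (Q + L')"
      unfolding ext_pos by auto
    have Q: "Q\<ge>1" "W P L' = W Q L'" "s = sig (om (Q + L'))" using Q0 t by auto
    have "W (2*P - b) (2*L'+b) = W (2*Q - b) (2*L'+b)" using H2[OF assms(1,2,3) Q(1)] Q(2) by simp
    moreover have "s = om (2*Q - b + (2*L'+b))" using H3[OF assms(1) Q(1)] Q(3) by simp
    moreover have "2*Q - b \<ge> 1" using Q(1) assms(1) by auto
    ultimately show "s \<in> extensions (W (2*P - b) (2*L'+b))" unfolding ext_pos by auto
  qed
qed



lemma om_numeral: "om (numeral k) = (if odd (numeral k :: nat) then A else sig (om (numeral k div 2)))"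
  by (subst om.simps) simp

definition tab :: "letter list" where "tab = [A,A,X,A,Y,A,X,A]"
definition G :: "nat \<Rightarrow> letter \<Rightarrow> letter" where
  "G j c = (if j mod 8 = 0 then c else tab ! (j mod 8))"

lemma om_small: "0 < j \<Longrightarrow> j < 8 \<Longrightarrow> om j = tab ! j"
proof -
  assume "0 < j" "j < 8"
  hence "j = 1 \<or> j = 2 \<or> j = 3 \<or> j = 4 \<or> j = 5 \<or> j = 6 \<or> j = 7" by auto
  thus ?thesis by (elim disjE) (simp_all add: tab_def om_numeral om_odd)
qed



lemma window: assumes "p \<ge> 1" "i < 8"
  shows "om (p+i) = G (p mod 8 + i) (om (8 * ((p+7) div 8)))"
proof -
  obtain t r where p: "p = 8*t + r" and r: "r < 8" proof -
    have "p = 8*(p div 8) + p mod 8" "p mod 8 < 8" by simp_all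
    thus ?thesis using that by blast
  qed
  have pm: "p mod 8 = r" using p r by simp
  show ?thesis
  proof (cases "r = 0")
    case True
    hence c: "(p+7) div 8 = t" using p by simp
    show ?thesis
    proof (cases "i = 0")
      case True thus ?thesis using \<open>r=0\<close> p c pm by (simp add: G_def)
    next
      case False
      have "om (2^3*t + i) = om i" using om_period[of i 3 t] False assms by simp
      hence "om (p + i) = tab ! i" using \<open>r=0\<close> p om_small[of i] False assms(2) by simp
      moreover have "G (p mod 8 + i) x = tab ! i" for x using pm \<open>r=0\<close> False assms(2) by (simp add: G_def)
      ultimately show ?thesis by simp
    qed
  next
    case False
    hence c: "(p+7) div 8 = t+1" using p r by simp
    consider "r + i < 8" | "r + i = 8" | "r + i > 8" by linarith
    thus ?thesis
    proof cases
      case 1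
      have "om (2^3*t + (r+i)) = om (r+i)" using om_period[of "r+i" 3 t] False 1 by simp
      hence "om (p + i) = tab ! (r+i)" using 1 False p om_small[of "r+i"] by (simp add: add.assoc)
      moreover have "G (p mod 8 + i) x = tab ! (r+i)" for x using pm 1 False by (simp add: G_def)
      ultimately show ?thesis by simp
    next
      case 2
      have "p + i = 8 * ((p+7) div 8)" using p c 2 by simp
      moreover have "G (p mod 8 + i) x = x" for x using pm 2 by (simp add: G_def)
      ultimately show ?thesis by simp
    next
      case 3
      have "om (2^3*(t+1) + (r+i-8)) = om (r+i-8)" using om_period[of "r+i-8" 3 "t+1"] 3 assms r by simp
      moreover have "p + i = 8*(t+1) + (r+i-8)" using p 3 by simp
      ultimately have "om (p + i) = tab ! (r+i-8)" using om_small[of "r+i-8"] 3 r assms by (simp add: add.assoc)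
      moreover have "(r+i) mod 8 = r+i-8" using 3 r assms by (simp add: mod_if)
      moreover have "G (p mod 8 + i) x = tab ! (r+i-8)" for x using pm 3 calculation(2) by (simp add: G_def)
      ultimately show ?thesis by simp
    qed
  qed
qed



definition Wm :: "nat \<Rightarrow> letter \<Rightarrow> nat \<Rightarrow> letter list" where
  "Wm r c m = map (\<lambda>i. G (r+i) c) [0..<m]"

definition Us :: "nat \<Rightarrow> letter list list" where
  "Us m = concat (map (\<lambda>r. map (\<lambda>c. Wm r c m) [X,Y,Z]) [0..<8])"

lemma set_Us: "u \<in> set (Us m) \<longleftrightarrow> (\<exists>r<8. \<exists>c\<in>{X,Y,Z}. u = Wm r c m)"
  unfolding Us_def by auto

lemma om8_nA: "m \<ge> 1 \<Longrightarrow> om (8*m) \<noteq> A"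
  using om_A_iff[of "8*m"] by simp

lemma Wset: assumes "m \<le> 8" shows "{W p m | p. p \<ge> 1} = set (Us m)"
proof
  show "{W p m | p. p \<ge> 1} \<subseteq> set (Us m)"
  proof clarify
    fix p :: nat assume "p \<ge> 1"
    define c where "c = om (8 * ((p+7) div 8))"
    have "c \<noteq> A" unfolding c_def using \<open>p\<ge>1\<close> by (intro om8_nA) simp
    hence "c \<in> {X,Y,Z}" by (cases c) auto
    moreover have "W p m = map (\<lambda>i. G (p mod 8 + i) c) [0..<m]"
      using window[OF \<open>p\<ge>1\<close>] assms unfolding c_def by (auto simp: list_eq_iff_nth_eq)
    ultimately show "W p m \<in> set (Us m)" unfolding set_Us Wm_def
      using mod_less_divisor[of 8 p] by (metis zero_less_numeral)
  qed
next
  show "set (Us m) \<subseteq> {W p m | p. p \<ge> 1}"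
  proof
    fix u assume "u \<in> set (Us m)"
    then obtain r c where u: "u = map (\<lambda>i. G (r+i) c) [0..<m]" "r < 8" "c \<in> {X,Y,Z}"
      unfolding set_Us Wm_def by blast
    obtain k where k: "k \<ge> 1" "om (8*k) = c"
    proof -
      have "om (8*1) = Z" "om (8*2) = X" "om (8*4) = Y" by (simp_all add: om_numeral om_odd)
      thus ?thesis using that u(3) by (metis empty_iff insertE le_numeral_extra(4) one_le_numeral)
    qed
    define p where "p = (if r = 0 then 8*k else 8*(k-1) + r)"
    have p1: "p \<ge> 1" using k by (simp add: p_def)
    have pm: "p mod 8 = r" using u(2) by (simp add: p_def)
    have pc: "(p+7) div 8 = k" using u(2) k by (auto simp: p_def)
    have "W p m = u" using window[OF p1] assms pm pc k u by (auto simp: list_eq_iff_nth_eq)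
    thus "u \<in> {W p m | p. p \<ge> 1}" using p1 by blast
  qed
qed

definition rsl :: "nat \<Rightarrow> letter list list" where
  "rsl L = remdups (map (\<lambda>(u,v). butlast u) (filter (\<lambda>(u,v). butlast u = butlast v \<and> last u \<noteq> last v) (List.product (Us (Suc L)) (Us (Suc L)))))"

lemma RS_small: assumes "L \<le> 7" shows "RS L = set (rsl L)"
proof -
  have U: "{W p (Suc L) | p. p \<ge> 1} = set (Us (Suc L))" using Wset assms by simp
  have "w \<in> RS L \<longleftrightarrow> (\<exists>u\<in>set (Us (Suc L)). \<exists>v\<in>set (Us (Suc L)). w = butlast u \<and> w = butlast v \<and> last u \<noteq> last v)" for w
  proof -
    have "w \<in> RS L \<longleftrightarrow> (\<exists>p\<ge>1. \<exists>q\<ge>1. w = butlast (W p (Suc L)) \<and> w = butlast (W q (Suc L)) \<and> last (W p (Suc L)) \<noteq> last (W q (Suc L)))"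
      unfolding RS_pos by (simp add: W_Suc)
    also have "\<dots> \<longleftrightarrow> (\<exists>u\<in>{W p (Suc L) | p. p \<ge> 1}. \<exists>v\<in>{W p (Suc L) | p. p \<ge> 1}. w = butlast u \<and> w = butlast v \<and> last u \<noteq> last v)"
      by blast
    finally show ?thesis unfolding U .
  qed
  moreover have "w \<in> set (rsl L) \<longleftrightarrow> (\<exists>u\<in>set (Us (Suc L)). \<exists>v\<in>set (Us (Suc L)). w = butlast u \<and> w = butlast v \<and> last u \<noteq> last v)" for w
    unfolding rsl_def by force
  ultimately show ?thesis by blast
qed

definition exl :: "nat \<Rightarrow> letter list \<Rightarrow> letter list" where
  "exl L w = remdups (map last (filter (\<lambda>u. butlast u = w) (Us (Suc L))))"

lemma ext_small: assumes "L \<le> 7" "length w = L" shows "extensions w = set (exl L w)"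
proof -
  have U: "{W p (Suc L) | p. p \<ge> 1} = set (Us (Suc L))" using Wset assms by simp
  have "s \<in> extensions w \<longleftrightarrow> (\<exists>u\<in>{W p (Suc L) | p. p \<ge> 1}. w = butlast u \<and> s = last u)" for s
    unfolding ext_pos assms(2) by (auto simp: W_Suc)
  moreover have "s \<in> set (exl L w) \<longleftrightarrow> (\<exists>u\<in>set (Us (Suc L)). w = butlast u \<and> s = last u)" for s
    unfolding exl_def by force
  ultimately show ?thesis unfolding U by blast
qed





lemma RS_red: assumes "b \<le> 1" "L' \<ge> 4"
  shows "RS (2*L'+b) = (\<lambda>P. W (2*P - b) (2*L'+b)) ` {P. P \<ge> 1 \<and> W P L' \<in> RS L'}"
  using red_a[OF assms] red_b[OF assms] by blast

lemma RS_transfer: assumes "b \<le> 1" "L' \<ge> 4" "\<forall>P\<in>Ps. P \<ge> 1" "RS L' = (\<lambda>P. W P L') ` Ps"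
  shows "RS (2*L'+b) = (\<lambda>P. W P (2*L'+b)) ` ((\<lambda>P. 2*P - b) ` Ps)"
proof -
  have "(\<lambda>P. W (2*P - b) (2*L'+b)) ` {P. P \<ge> 1 \<and> W P L' \<in> RS L'} = (\<lambda>P. W (2*P - b) (2*L'+b)) ` Ps"
  proof
    show "(\<lambda>P. W (2*P - b) (2*L'+b)) ` {P. P \<ge> 1 \<and> W P L' \<in> RS L'} \<subseteq> (\<lambda>P. W (2*P - b) (2*L'+b)) ` Ps"
    proof clarify
      fix P assume P: "P \<ge> 1" "W P L' \<in> RS L'"
      then obtain P0 where P0: "P0 \<in> Ps" "W P L' = W P0 L'" using assms(4) by auto
      hence "W (2*P - b) (2*L'+b) = W (2*P0 - b) (2*L'+b)" using H2[OF assms(1,2) P(1)] assms(3) by blast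
      thus "W (2*P - b) (2*L'+b) \<in> (\<lambda>P. W (2*P - b) (2*L'+b)) ` Ps" using P0(1) by blast
    qed
  next
    show "(\<lambda>P. W (2*P - b) (2*L'+b)) ` Ps \<subseteq> (\<lambda>P. W (2*P - b) (2*L'+b)) ` {P. P \<ge> 1 \<and> W P L' \<in> RS L'}"
      using assms(3,4) by blast
  qed
  thus ?thesis unfolding RS_red[OF assms(1,2)] image_image by simp
qed

definition cond :: "nat \<Rightarrow> nat \<Rightarrow> bool" where "cond n L \<longleftrightarrow> L < 2^n + 2^(n-1)"
definition Ps :: "nat \<Rightarrow> nat \<Rightarrow> nat set" where
  "Ps n L = (if cond n L then {2^(n+1) - L, 2^(n+2) + 2^n - L} else {2^(n+1) - L})"

definition Pstate :: "nat \<Rightarrow> nat \<Rightarrow> bool" where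
  "Pstate n L \<longleftrightarrow> RS L = (\<lambda>P. W P L) ` Ps n L
     \<and> extensions (W (2^(n+1) - L) L) = {X,Y,Z}
     \<and> (cond n L \<longrightarrow> extensions (W (2^(n+2) + 2^n - L) L) = {(sig^^(n-2)) X, (sig^^(n-1)) X})"

lemma base4: "Pstate 2 4"
proof -
  have w: "W 4 4 = [Y,A,X,A]" "W 16 4 = [X,A,X,A]" by (simp_all add: W_def upt_rec om_numeral om_odd)
  have r: "set (rsl 4) = {[Y,A,X,A],[X,A,X,A]}" by code_simp
  have e1: "set (exl 4 [Y,A,X,A]) = {X,Y,Z}" by code_simp
  have e2: "set (exl 4 [X,A,X,A]) = {X,Y}" by code_simp
  show ?thesis unfolding Pstate_def Ps_def cond_def
    using w r e1 e2 RS_small[of 4] ext_small[of 4 "[Y,A,X,A]"] ext_small[of 4 "[X,A,X,A]"] by simp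
qed

lemma base5: "Pstate 2 5"
proof -
  have w: "W 3 5 = [A,Y,A,X,A]" "W 15 5 = [A,X,A,X,A]" by (simp_all add: W_def upt_rec om_numeral om_odd)
  have r: "set (rsl 5) = {[A,Y,A,X,A],[A,X,A,X,A]}" by code_simp
  have e1: "set (exl 5 [A,Y,A,X,A]) = {X,Y,Z}" by code_simp
  have e2: "set (exl 5 [A,X,A,X,A]) = {X,Y}" by code_simp
  show ?thesis unfolding Pstate_def Ps_def cond_def
    using w r e1 e2 RS_small[of 5] ext_small[of 5 "[A,Y,A,X,A]"] ext_small[of 5 "[A,X,A,X,A]"] by simp
qed

lemma base6: "Pstate 2 6"
proof -
  have w: "W 2 6 = [X,A,Y,A,X,A]" by (simp_all add: W_def upt_rec om_numeral om_odd)
  have r: "set (rsl 6) = {[X,A,Y,A,X,A]}" by code_simp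
  have e1: "set (exl 6 [X,A,Y,A,X,A]) = {X,Y,Z}" by code_simp
  show ?thesis unfolding Pstate_def Ps_def cond_def
    using w r e1 RS_small[of 6] ext_small[of 6 "[X,A,Y,A,X,A]"] by simp
qed

lemma base7: "Pstate 2 7"
proof -
  have "om (2*3) = sig (om 3)" by (rule om_even) simp
  hence o6: "om 6 = X" by (simp add: om_odd)
  have "W 1 7 = map om [1,2,3,4,5,6,7]" unfolding W_def by (simp add: upt_rec numeral_eq_Suc)
  hence w: "W 1 7 = [A,X,A,Y,A,X,A]" using om_2 om_4 o6 by (simp add: om_odd)
  have r: "set (rsl 7) = {[A,X,A,Y,A,X,A]}" by code_simp
  have e1: "set (exl 7 [A,X,A,Y,A,X,A]) = {X,Y,Z}" by code_simp
  show ?thesis unfolding Pstate_def Ps_def cond_def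
    using w r e1 RS_small[of 7] ext_small[of 7 "[A,X,A,Y,A,X,A]"] by simp
qed



lemma step: assumes n: "n \<ge> 2" and IH: "\<And>L'. 2^n \<le> L' \<Longrightarrow> L' < 2^(n+1) \<Longrightarrow> Pstate n L'"
  and L: "2^(n+1) \<le> L" "L < 2^(n+2)"
  shows "Pstate (n+1) L"
proof -
  define M :: nat where "M = 2^n"
  define h :: nat where "h = 2^(n-1)"
  obtain m where nm: "n = m + 2" using n by (metis le_add_diff_inverse2)
  have Mh: "M = 2*h" unfolding M_def h_def nm by simp
  have "(1::nat) \<le> 2^m" by simp
  hence h2: "h \<ge> 2" unfolding h_def nm by simp
  have p1: "2^(n+1) = 2*M" "2^(n+2) = 4*M" "2^(n+1+1) = 4*M" "2^(n+1+2) = 8*M" "2^(n+1-1) = M"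
    unfolding M_def by simp_all
  define L' b where "L' = L div 2" and "b = L mod 2"
  have Lb: "L = 2*L'+b" "b \<le> 1" unfolding L'_def b_def by auto
  have L'r: "2^n \<le> L'" "L' < 2^(n+1)" using L Lb p1 unfolding M_def[symmetric] by auto
  have L'4: "L' \<ge> 4" using L'r(1) Mh h2 unfolding M_def[symmetric] by simp
  have PS: "Pstate n L'" using IH L'r by blast
  have c: "cond (n+1) L \<longleftrightarrow> cond n L'" unfolding cond_def using p1 Lb Mh unfolding h_def[symmetric] M_def[symmetric] by auto
  define P1 P2 where "P1 = 2*M - L'" and "P2 = 4*M + M - L'"
  have P1: "P1 \<ge> 1" "2*P1 - b = 2^(n+1+1) - L" using L'r Lb p1 unfolding P1_def M_def[symmetric] by auto
  have P2: "P2 \<ge> 1" "2*P2 - b = 2^(n+1+2) + 2^(n+1) - L" using L'r Lb p1 unfolding P2_def M_def[symmetric] by auto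
  have Psn: "Ps n L' = (if cond n L' then {P1, P2} else {P1})" unfolding Ps_def P1_def P2_def p1 M_def by simp
  have i2: "(\<lambda>P. 2*P - b) ` {P1,P2} = {2^(n+1+1) - L, 2^(n+1+2) + 2^(n+1) - L}"
    by (simp only: image_insert image_empty P1(2) P2(2))
  have i1: "(\<lambda>P. 2*P - b) ` {P1} = {2^(n+1+1) - L}"
    by (simp only: image_insert image_empty P1(2))
  have Psn1: "Ps (n+1) L = (\<lambda>P. 2*P - b) ` Ps n L'"
    unfolding Psn Ps_def[of "n+1" L] c by (cases "cond n L'") (simp_all only: i1 i2 if_True if_False)
  have RSL: "RS L = (\<lambda>P. W P L) ` Ps (n+1) L"
  proof -
    have "RS (2*L'+b) = (\<lambda>P. W P (2*L'+b)) ` ((\<lambda>P. 2*P - b) ` Ps n L')"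
      by (rule RS_transfer[OF Lb(2) L'4]) (use P1 P2 PS in \<open>auto simp: Psn Pstate_def\<close>)
    thus ?thesis unfolding Psn1 by (simp only: Lb(1)[symmetric])
  qed
  have P1e: "P1 = 2^(n+1) - L'" by (simp only: P1_def p1(1))
  have P2e: "P2 = 2^(n+2) + 2^n - L'" by (simp only: P2_def p1(2) M_def)
  have La: "2*L'+b = L" using Lb(1) by simp
  have E1: "extensions (W (2^(n+1+1) - L) L) = {X,Y,Z}"
  proof -
    have a: "extensions (W P1 L') = {X,Y,Z}" using PS P1e unfolding Pstate_def by simp
    have "extensions (W (2*P1 - b) (2*L'+b)) = {X,Y,Z}" unfolding red_c[OF Lb(2) L'4 P1(1)] a by auto
    thus ?thesis by (simp only: P1(2) La)
  qed
  have E2: "extensions (W (2^(n+1+2) + 2^(n+1) - L) L) = {(sig^^(n+1-2)) X, (sig^^(n+1-1)) X}"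
    if "cond (n+1) L"
  proof -
    have a: "extensions (W P2 L') = {(sig^^(n-2)) X, (sig^^(n-1)) X}"
      using PS that c P2e unfolding Pstate_def by simp
    have s: "sig ((sig^^(n-2)) X) = (sig^^(n+1-2)) X" "sig ((sig^^(n-1)) X) = (sig^^(n+1-1)) X"
    proof -
      have e: "n - 2 = m" "n+1-2 = Suc m" "n-1 = Suc m" "n+1-1 = Suc (Suc m)" by (simp_all add: nm)
      show "sig ((sig^^(n-2)) X) = (sig^^(n+1-2)) X" "sig ((sig^^(n-1)) X) = (sig^^(n+1-1)) X"
        by (simp_all only: e funpow.simps(2) o_apply)
    qed
    have "extensions (W (2*P2 - b) (2*L'+b)) = {(sig^^(n+1-2)) X, (sig^^(n+1-1)) X}"
      unfolding red_c[OF Lb(2) L'4 P2(1)] a s[symmetric] by simp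
    thus ?thesis by (simp only: P2(2) La)
  qed
  show ?thesis unfolding Pstate_def using RSL E1 E2 by simp
qed

lemma main: "n \<ge> 2 \<Longrightarrow> 2^n \<le> L \<Longrightarrow> L < 2^(n+1) \<Longrightarrow> Pstate n L"
proof (induction n arbitrary: L rule: nat_induct_at_least)
  case base
  hence "4 \<le> L" "L < 8" by simp_all
  hence "L = 4 \<or> L = 5 \<or> L = 6 \<or> L = 7" by linarith
  thus ?case
  proof (elim disjE)
    assume "L = 4" thus ?case using base4 by (simp only:)
  next
    assume "L = 5" thus ?case using base5 by (simp only:)
  next
    assume "L = 6" thus ?case using base6 by (simp only:)
  next
    assume "L = 7" thus ?case using base7 by (simp only:)
  qed
next
  case (Suc n)
  have a: "2^(n+1) \<le> L" "L < 2^(n+2)" using Suc.prems by (simp_all only: Suc_eq_plus1 add.assoc one_add_one)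
  have "Pstate (n+1) L" by (rule step[OF Suc.hyps(1) Suc.IH a])
  thus ?case by (simp only: Suc_eq_plus1)
qed



lemma suffix_W: "a + L \<le> b \<Longrightarrow> suffix_len L (map om [a..<b]) = W (b - L) L"
  unfolding suffix_len_def W_def by (simp add: drop_map)

lemma sig4: "(sig^^(m+4)) A = (sig^^m) X"
proof -
  have "(sig^^4) A = X" by (simp add: numeral_eq_Suc)
  thus ?thesis by (simp only: funpow_add o_apply)
qed

lemma w2_list: "(tau^^m) [A] @ (tau^^m) [X] @ (tau^^(m+1)) [A] = map om [2^(m+1)*7+1..<2^(m+4) + 2^(m+2)]"
proof -
  define K :: nat where "K = 2^m"
  have P: "(2::nat)^(m+1) = 2*K" "(2::nat)^(m+2) = 4*K" "(2::nat)^(m+4) = 16*K" unfolding K_def by (simp_all add: power_add)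
  have l1: "map om [14*K+1..<16*K] = map om [1..<2*K]"
    using map_om_shift[of 7 "m+1"] unfolding P by (simp add: algebra_simps)
  have l3: "map om [16*K+1..<16*K+4*K] = map om [1..<4*K]"
    using map_om_shift[of 4 "m+2"] unfolding P by (simp add: algebra_simps)
  have o: "om (16*K) = (sig^^m) X" using om_pow2[of "m+4"] sig4 unfolding P by simp
  have "[14*K+1..<16*K + 4*K] = [14*K+1..<16*K] @ [16*K..<16*K + 4*K]"
    using upt_add_eq_append[of "14*K+1" "16*K" "4*K"] unfolding K_def by simp
  also have "[16*K..<16*K + 4*K] = 16*K # [16*K+1..<16*K + 4*K]"
    unfolding K_def by (simp add: upt_rec)
  finally have "map om [14*K+1..<16*K + 4*K] = map om [1..<2*K] @ [(sig^^m) X] @ map om [1..<4*K]"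
    using l1 l3 o by simp
  moreover have "(tau^^m) [A] @ (tau^^m) [X] @ (tau^^(m+1)) [A] = map om [1..<2*K] @ [(sig^^m) X] @ map om [1..<4*K]"
  proof -
    have q: "(2::nat)^(m+1+1) = 4*K" "(2::nat)^(m+1) = 2*K" unfolding K_def by simp_all
    have "(tau^^m) [A] = map om [1..<2*K]" "(tau^^(m+1)) [A] = map om [1..<4*K]"
      by (simp_all only: taun_A q)
    moreover have "(tau^^m) [X] = [(sig^^m) X]" by (rule taun_letter) simp
    ultimately show ?thesis by simp
  qed
  moreover have "2^(m+1)*7+1 = 14*K+1" "(2::nat)^(m+4) + 2^(m+2) = 16*K + 4*K" using P by simp_all
  ultimately show ?thesis by simp
qed



theorem theorem2:
  fixes n k L :: nat
  assumes "n \<ge> 2" and "L = 2 ^ n + k" and "k < 2 ^ n"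
  shows "(k < 2 ^ (n - 1) \<longrightarrow>
            (let w1 = suffix_len L ((tau ^^ n) [A]);
                 w2 = suffix_len L ((tau ^^ (n - 2)) [A] @ (tau ^^ (n - 2)) [X] @ (tau ^^ (n - 1)) [A])
             in {w. length w = L \<and> right_special w} = {w1, w2} \<and> w1 \<noteq> w2
                \<and> extensions w1 = {X, Y, Z}
                \<and> extensions w2 = {s. [s] = (tau ^^ (n - 2)) [X] \<or> [s] = (tau ^^ (n - 1)) [X]}))
       \<and> (2 ^ (n - 1) \<le> k \<longrightarrow>
            {w. length w = L \<and> right_special w} = {suffix_len L ((tau ^^ n) [A])}
            \<and> extensions (suffix_len L ((tau ^^ n) [A])) = {X, Y, Z})"
proof -
  obtain m where nm: "n = m + 2" using assms(1) by (metis le_add_diff_inverse2)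
  define K :: nat where "K = 2^m"
  have P: "(2::nat)^n = 4*K" "(2::nat)^(n-1) = 2*K" "(2::nat)^(n+1) = 8*K" "(2::nat)^(n+2) = 16*K"
     "(2::nat)^(m+1) = 2*K" "(2::nat)^(m+4) = 16*K" "(2::nat)^(m+2) = 4*K"
    unfolding K_def nm by (simp_all add: power_add)
  have L1: "2^n \<le> L" "L < 2^(n+1)" using assms(2,3) P by simp_all
  have PS: "Pstate n L" by (rule main[OF assms(1) L1])
  have c: "cond n L \<longleftrightarrow> k < 2^(n-1)" unfolding cond_def using assms(2) by simp
  have RSe: "{w. length w = L \<and> right_special w} = RS L" by (simp add: RS_def)
  have w1e: "suffix_len L ((tau ^^ n) [A]) = W (2^(n+1) - L) L"
    unfolding taun_A by (rule suffix_W) (use L1 in simp)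
  have ex2: "{s. [s] = (tau ^^ (n - 2)) [X] \<or> [s] = (tau ^^ (n - 1)) [X]} = {(sig^^(n-2)) X, (sig^^(n-1)) X}"
    by (auto simp: taun_letter)
  have w2e: "suffix_len L ((tau ^^ (n - 2)) [A] @ (tau ^^ (n - 2)) [X] @ (tau ^^ (n - 1)) [A])
      = W (2^(n+2) + 2^n - L) L" if "k < 2^(n-1)"
  proof -
    have e: "n - 2 = m" "n - 1 = m + 1" using nm by simp_all
    have "suffix_len L ((tau ^^ (n - 2)) [A] @ (tau ^^ (n - 2)) [X] @ (tau ^^ (n - 1)) [A])
        = suffix_len L (map om [2^(m+1)*7+1..<2^(m+4) + 2^(m+2)])"
      unfolding e w2_list ..
    also have "\<dots> = W (2^(m+4) + 2^(m+2) - L) L"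
      by (rule suffix_W) (use that assms(2) P in simp)
    also have "2^(m+4) + 2^(m+2) = (2::nat)^(n+2) + 2^n" using P by simp
    finally show ?thesis .
  qed
  have E: "extensions (W (2^(n+1) - L) L) = {X,Y,Z}" using PS unfolding Pstate_def by blast
  show ?thesis
  proof (intro conjI impI)
    assume k: "k < 2^(n-1)"
    have E2: "extensions (W (2^(n+2) + 2^n - L) L) = {(sig^^(n-2)) X, (sig^^(n-1)) X}"
      using PS k c unfolding Pstate_def by blast
    have R: "RS L = {W (2^(n+1) - L) L, W (2^(n+2) + 2^n - L) L}"
      using PS k c unfolding Pstate_def Ps_def by simp
    have ne: "W (2^(n+1) - L) L \<noteq> W (2^(n+2) + 2^n - L) L"
    proof
      assume "W (2^(n+1) - L) L = W (2^(n+2) + 2^n - L) L"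
      hence "{X,Y,Z} = {(sig^^(n-2)) X, (sig^^(n-1)) X}" using E E2 by simp
      hence "X \<in> {(sig^^(n-2)) X, (sig^^(n-1)) X}" "Y \<in> {(sig^^(n-2)) X, (sig^^(n-1)) X}"
        "Z \<in> {(sig^^(n-2)) X, (sig^^(n-1)) X}" by blast+
      thus False by auto
    qed
    show "let w1 = suffix_len L ((tau ^^ n) [A]);
                 w2 = suffix_len L ((tau ^^ (n - 2)) [A] @ (tau ^^ (n - 2)) [X] @ (tau ^^ (n - 1)) [A])
             in {w. length w = L \<and> right_special w} = {w1, w2} \<and> w1 \<noteq> w2
                \<and> extensions w1 = {X, Y, Z}
                \<and> extensions w2 = {s. [s] = (tau ^^ (n - 2)) [X] \<or> [s] = (tau ^^ (n - 1)) [X]}"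
      unfolding Let_def w1e w2e[OF k] RSe R ex2 using ne E E2 by blast
  next
    assume k: "2^(n-1) \<le> k"
    have R: "RS L = {W (2^(n+1) - L) L}"
      using PS k c unfolding Pstate_def Ps_def by simp
    show "{w. length w = L \<and> right_special w} = {suffix_len L ((tau ^^ n) [A])}"
      unfolding RSe R w1e ..
    show "extensions (suffix_len L ((tau ^^ n) [A])) = {X, Y, Z}" unfolding w1e by (rule E)
  qed
qed

end
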